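(* Let $\mathcal A$ be a linearly ordered $\mathbf{UL}_\omega$-algebra and let $B=\{p_1,\dots,p_k\}\subseteq A$. Let $$M=\Big\{\prod_{i=1}^kp_i^{\alpha(i)}:\alpha\in\mathbb N^k\Big\},$$ and for $a\in M$ and $b\in B$ let $(a\mapsto b]=\{c\in M: ac\le b\}$. For every $p\in B$, let $M\Rightarrow p=\{(m\mapsto p]: m\in M\}$. Then: (i) $M\Rightarrow p$ is linearly ordered under set inclusion; (ii) $M\Rightarrow p$ is finite.
   Context: A $\mathbf{UL}$-algebra is a structure $\langle A,\wedge,\vee,\cdot,\to,e,f,\bot,\top\rangle$ such that: - $\langle A,\wedge,\vee,\bot,\top\rangle$ is a bounded lattice; - $\langle A,\cdot,e\rangle$ is a commutative monoid; - $xy\le z$ iff $y\le x\to z$; - for all $x,y,u,v$: $\lambda_u((x\vee y)\to x)\vee\lambda_v((x\vee y)\to y)=e$, where $\lambda_a(b)=(a\to ba)\wedge e$. A $\mathbf{UL}_\omega$-algebra is a $\mathbf{UL}$-algebra satisfying $x\to e=x^2\to e$ for all $x$. This class includes all $\mathbf{IUL}_\omega$-algebras. Powers: $x^0=e$, $x^{n+1}=x^nx$. $\mathbb N=\{0,1,2,\dots\}$, and $\alpha(i)$ is the $i$-th component of $\alpha\in\mathbb N^k$. *)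

theory Defs
  imports Main
begin

text \<open>A UL-algebra on the carrier type 'a: the bounded lattice structure is given by the
type class bounded_lattice (inf, sup, bot, top); the remaining operations are
parameters: multiplication mult, residuum imp, unit e, constant f.\<close>

definition lam :: "('a \<Rightarrow> 'a \<Rightarrow> 'a) \<Rightarrow> ('a \<Rightarrow> 'a \<Rightarrow> 'a) \<Rightarrow> 'a \<Rightarrow> 'a \<Rightarrow> ('a::bounded_lattice) \<Rightarrow> 'a"
  where "lam mult imp e a b = inf (imp a (mult b a)) e"

definition UL_algebra ::
  "('a::bounded_lattice \<Rightarrow> 'a \<Rightarrow> 'a) \<Rightarrow> ('a \<Rightarrow> 'a \<Rightarrow> 'a) \<Rightarrow> 'a \<Rightarrow> 'a \<Rightarrow> bool" where
  "UL_algebra mult imp e f \<longleftrightarrow>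
     (\<forall>x y z. mult (mult x y) z = mult x (mult y z)) \<and>
     (\<forall>x y. mult x y = mult y x) \<and>
     (\<forall>x. mult e x = x) \<and>
     (\<forall>x y z. mult x y \<le> z \<longleftrightarrow> y \<le> imp x z) \<and>
     (\<forall>x y u v. sup (lam mult imp e u (imp (sup x y) x))
                      (lam mult imp e v (imp (sup x y) y)) = e)"

definition UL_omega_algebra ::
  "('a::bounded_lattice \<Rightarrow> 'a \<Rightarrow> 'a) \<Rightarrow> ('a \<Rightarrow> 'a \<Rightarrow> 'a) \<Rightarrow> 'a \<Rightarrow> 'a \<Rightarrow> bool" where
  "UL_omega_algebra mult imp e f \<longleftrightarrow>
     UL_algebra mult imp e f \<and> (\<forall>x. imp x e = imp (mult x x) e)"

fun upow :: "('a \<Rightarrow> 'a \<Rightarrow> 'a) \<Rightarrow> 'a \<Rightarrow> 'a \<Rightarrow> nat \<Rightarrow> 'a" where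
  "upow mult e x 0 = e"
| "upow mult e x (Suc n) = mult (upow mult e x n) x"

fun mprod :: "('a \<Rightarrow> 'a \<Rightarrow> 'a) \<Rightarrow> 'a \<Rightarrow> (nat \<Rightarrow> 'a) \<Rightarrow> (nat \<Rightarrow> nat) \<Rightarrow> nat \<Rightarrow> 'a" where
  "mprod mult e p \<alpha> 0 = e"
| "mprod mult e p \<alpha> (Suc i) = mult (mprod mult e p \<alpha> i) (upow mult e (p (Suc i)) (\<alpha> (Suc i)))"

definition Mset :: "('a \<Rightarrow> 'a \<Rightarrow> 'a) \<Rightarrow> 'a \<Rightarrow> (nat \<Rightarrow> 'a) \<Rightarrow> nat \<Rightarrow> 'a set" where
  "Mset mult e p k = {mprod mult e p \<alpha> k | \<alpha>. True}"

definition downset :: "('a::order \<Rightarrow> 'a \<Rightarrow> 'a) \<Rightarrow> 'a set \<Rightarrow> 'a \<Rightarrow> 'a \<Rightarrow> 'a set" where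
  "downset mult M a b = {c \<in> M. mult a c \<le> b}"

definition Mimp :: "('a::order \<Rightarrow> 'a \<Rightarrow> 'a) \<Rightarrow> 'a set \<Rightarrow> 'a \<Rightarrow> 'a set set" where
  "Mimp mult M q = {downset mult M m q | m. m \<in> M}"

end

theory Submission
  imports Defs Complex_Main
begin

lemma sub1:
  fixes s :: "nat \<Rightarrow> nat"
  shows "\<exists>r::nat\<Rightarrow>nat. strict_mono r \<and> (\<forall>m n. m \<le> n \<longrightarrow> s (r m) \<le> s (r n))"
proof -
  obtain f where f: "strict_mono f" "monoseq (\<lambda>n. s (f n))"
    using seq_monosub by blast
  show ?thesis
  proof (cases "\<forall>m n. m \<le> n \<longrightarrow> s (f m) \<le> s (f n)")
    case True then show ?thesis using f by blast
  next
    case False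
    then have dec: "\<forall>m n. m \<le> n \<longrightarrow> s (f n) \<le> s (f m)"
      using f(2) unfolding monoseq_def by blast
    define v where "v = (LEAST v. \<exists>n. s (f n) = v)"
    have "\<exists>n. s (f n) = v" unfolding v_def by (rule LeastI_ex) blast
    then obtain n0 where n0: "s (f n0) = v" by blast
    have const: "s (f (n + n0)) = v" for n
    proof -
      have "s (f (n + n0)) \<le> v" using dec n0 by auto
      moreover have "v \<le> s (f (n + n0))" unfolding v_def by (rule Least_le) blast
      ultimately show ?thesis by simp
    qed
    have "strict_mono (\<lambda>n. f (n + n0))"
      using f(1) unfolding strict_mono_def by simp
    then show ?thesis using const by (intro exI[of _ "\<lambda>n. f (n + n0)"]) auto
  qed
qed

lemma dickson:
  fixes f :: "nat \<Rightarrow> nat \<Rightarrow> nat"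
  assumes "finite I"
  shows "\<exists>r::nat\<Rightarrow>nat. strict_mono r \<and> (\<forall>l\<in>I. \<forall>m n. m \<le> n \<longrightarrow> f (r m) l \<le> f (r n) l)"
  using assms
proof (induction I rule: finite_induct)
  case empty
  show ?case by (rule exI[of _ "id::nat\<Rightarrow>nat"]) (simp add: strict_mono_def)
next
  case (insert l I)
  from insert.IH obtain r :: "nat \<Rightarrow> nat" where r: "strict_mono r" "\<forall>l\<in>I. \<forall>m n. m \<le> n \<longrightarrow> f (r m) l \<le> f (r n) l"
    by (elim exE conjE) (rule that, assumption, assumption)
  obtain r' :: "nat \<Rightarrow> nat" where r': "strict_mono r'" "\<forall>m n. m \<le> n \<longrightarrow> f (r (r' m)) l \<le> f (r (r' n)) l"
    using sub1[of "\<lambda>n. f (r n) l"] by (elim exE conjE) (rule that, assumption, assumption)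
  have "strict_mono (r \<circ> r')" using r(1) r'(1) unfolding strict_mono_def by simp
  moreover have "\<forall>l'\<in>insert l I. \<forall>m n. m \<le> n \<longrightarrow> f ((r \<circ> r') m) l' \<le> f ((r \<circ> r') n) l'"
  proof (intro ballI allI impI)
    fix l' m n assume l': "l' \<in> insert l I" and mn: "(m::nat) \<le> n"
    show "f ((r \<circ> r') m) l' \<le> f ((r \<circ> r') n) l'"
    proof (cases "l' = l")
      case True then show ?thesis using r'(2) mn by simp
    next
      case False
      then have "l' \<in> I" using l' by simp
      moreover have "r' m \<le> r' n" using r'(1) mn by (simp add: strict_mono_less_eq)
      ultimately show ?thesis using r(2) by simp
    qed
  qed
  ultimately show ?case by (intro exI[of _ "r \<circ> r'"] conjI)
qed

locale ulc =
  fixes mult :: "'a::bounded_lattice \<Rightarrow> 'a \<Rightarrow> 'a" and imp :: "'a \<Rightarrow> 'a \<Rightarrow> 'a" and e :: 'a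
  assumes assoc: "mult (mult x y) z = mult x (mult y z)"
    and comm: "mult x y = mult y x"
    and unit: "mult e x = x"
    and res: "mult x y \<le> z \<longleftrightarrow> y \<le> imp x z"
    and lin: "x \<le> y \<or> y \<le> x"
    and om: "imp x e = imp (mult x x) e"
begin

lemma lcomm: "mult x (mult y z) = mult y (mult x z)"
  by (metis assoc comm)

lemma runit: "mult x e = x" using unit comm by metis

lemma mono_r: "x \<le> y \<Longrightarrow> mult z x \<le> mult z y"
  by (metis order_trans res order_refl)

lemma mono_l: "x \<le> y \<Longrightarrow> mult x z \<le> mult y z"
  using mono_r comm by metis

lemma om2: "mult y s \<le> e \<longleftrightarrow> mult y (mult s s) \<le> e"
proof -
  have "mult y s \<le> e \<longleftrightarrow> mult s y \<le> e" by (simp add: comm)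
  also have "\<dots> \<longleftrightarrow> y \<le> imp s e" by (rule res)
  also have "\<dots> \<longleftrightarrow> y \<le> imp (mult s s) e" by (simp add: om[of s])
  also have "\<dots> \<longleftrightarrow> mult (mult s s) y \<le> e" by (simp add: res)
  finally show ?thesis by (simp add: comm)
qed

lemma om3: "mult y s \<le> e \<longleftrightarrow> mult y (mult s (mult s s)) \<le> e"
  using om2[of y s] om2[of "mult y s" s] by (simp add: assoc)

lemma core:
  assumes F1: "\<not> (mult a s \<le> q \<longleftrightarrow> a \<le> q)"
    and F2: "\<not> (mult (mult a (mult y (mult s s))) s \<le> q \<longleftrightarrow> mult a (mult y (mult s s)) \<le> q)"
  shows False
proof -
  define b where "b = mult a (mult y (mult s s))"
  have b1: "b = mult (mult a s) (mult y s)" unfolding b_def by (metis assoc lcomm)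
  have b2: "mult b s = mult a (mult y (mult s (mult s s)))" unfolding b_def by (metis assoc lcomm)
  note F2' = F2[folded b_def]
  show False
  proof (cases "s \<le> e")
    case True
    have "mult a s \<le> a" using mono_r[OF True, of a] by (simp add: runit)
    moreover have "mult b s \<le> b" using mono_r[OF True, of b] by (simp add: runit)
    ultimately have h: "mult a s \<le> q" "\<not> a \<le> q" "mult b s \<le> q" "\<not> b \<le> q"
      using F1 F2' order_trans by blast+
    show False
    proof (cases "mult y s \<le> e")
      case True
      then have "b \<le> mult a s" using mono_r[OF True, of "mult a s"] b1 by (simp add: runit)
      then show False using h order_trans by blast
    next
      case False
      then have "\<not> mult y (mult s (mult s s)) \<le> e" using om3 by blast
      then have "e \<le> mult y (mult s (mult s s))" using lin by blast
      then have "a \<le> mult b s" using mono_r[of e _ a] b2 by (simp add: runit)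
      then show False using h order_trans by blast
    qed
  next
    case False
    then have se: "e \<le> s" using lin by blast
    have "a \<le> mult a s" using mono_r[OF se, of a] by (simp add: runit)
    moreover have "b \<le> mult b s" using mono_r[OF se, of b] by (simp add: runit)
    ultimately have h: "a \<le> q" "\<not> mult a s \<le> q" "b \<le> q" "\<not> mult b s \<le> q"
      using F1 F2' order_trans by blast+
    show False
    proof (cases "mult y s \<le> e")
      case True
      then have "mult y (mult s (mult s s)) \<le> e" using om3 by blast
      then have "mult b s \<le> a" using mono_r[of _ e a] b2 by (simp add: runit)
      then show False using h order_trans by blast
    next
      case False
      then have "e \<le> mult y s" using lin by blast
      then have "mult a s \<le> b" using mono_r[of e _ "mult a s"] b1 by (simp add: runit)
      then show False using h order_trans by blast
    qed
  qed
qed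

lemma upow_add: "upow mult e x (m + n) = mult (upow mult e x m) (upow mult e x n)"
  by (induction n) (simp_all add: runit assoc)

lemma mprod_add:
  "mprod mult e p (\<lambda>i. \<alpha> i + \<beta> i) n = mult (mprod mult e p \<alpha> n) (mprod mult e p \<beta> n)"
  by (induction n) (simp_all add: unit upow_add assoc comm lcomm)

lemma mprod_cong:
  "(\<And>i. 1 \<le> i \<Longrightarrow> i \<le> n \<Longrightarrow> \<alpha> i = \<beta> i) \<Longrightarrow> mprod mult e p \<alpha> n = mprod mult e p \<beta> n"
  by (induction n) auto

end

context ulc
begin

lemma stab:
  assumes i: "1 \<le> i" "i \<le> k"
  shows "\<exists>N. \<forall>\<gamma>. N \<le> \<gamma> i \<longrightarrow>
     (mprod mult e p (\<gamma>(i := Suc (\<gamma> i))) k \<le> q \<longleftrightarrow> mprod mult e p \<gamma> k \<le> q)"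
proof (rule ccontr)
  assume "\<not> ?thesis"
  then have "\<forall>N. \<exists>\<gamma>. N \<le> \<gamma> i \<and>
     \<not> (mprod mult e p (\<gamma>(i := Suc (\<gamma> i))) k \<le> q \<longleftrightarrow> mprod mult e p \<gamma> k \<le> q)" by blast
  then obtain G where G: "\<And>N. N \<le> G N i \<and>
     \<not> (mprod mult e p ((G N)(i := Suc (G N i))) k \<le> q \<longleftrightarrow> mprod mult e p (G N) k \<le> q)"
    by metis
  define Ns where "Ns n = ((\<lambda>m. G m i + 2) ^^ n) 0" for n
  define g where "g n = G (Ns n)" for n
  have step: "g n i + 2 \<le> g (Suc n) i" for n
    using G[of "Ns (Suc n)"] by (simp add: g_def Ns_def)
  have gap: "j < j' \<Longrightarrow> g j i + 2 \<le> g j' i" for j j'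
  proof (induction j')
    case 0 thus ?case by simp
  next
    case (Suc j')
    show ?case
    proof (cases "j < j'")
      case True
      then show ?thesis using Suc.IH step[of j'] by linarith
    next
      case False
      then have "j = j'" using Suc.prems by simp
      then show ?thesis using step[of j'] by simp
    qed
  qed
  obtain r :: "nat \<Rightarrow> nat" where r: "strict_mono r" "\<forall>l\<in>{1..k}. \<forall>m n. m \<le> n \<longrightarrow> g (r m) l \<le> g (r n) l"
    using dickson[of "{1..k}" g, OF finite_atLeastAtMost] by (elim exE conjE) (rule that, assumption, assumption)
  define \<gamma> where "\<gamma> = g (r 0)"
  define \<gamma>' where "\<gamma>' = g (r 1)"
  have r01: "r 0 < r 1" using r(1) unfolding strict_mono_def by simp
  have le: "\<forall>l\<in>{1..k}. \<gamma> l \<le> \<gamma>' l" using r(2) unfolding \<gamma>_def \<gamma>'_def by simp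
  have gi: "\<gamma> i + 2 \<le> \<gamma>' i" using gap[OF r01] unfolding \<gamma>_def \<gamma>'_def .
  define \<delta> where "\<delta> = (\<lambda>l. \<gamma>' l - \<gamma> l)"
  define ei where "ei = (\<lambda>l. if l = i then 1 else (0::nat))"
  define y where "y = mprod mult e p (\<delta>(i := \<delta> i - 2)) k"
  define s where "s = mprod mult e p ei k"
  define a where "a = mprod mult e p \<gamma> k"
  have e1: "\<gamma>(i := Suc (\<gamma> i)) = (\<lambda>l. \<gamma> l + ei l)" by (auto simp: ei_def)
  have A1: "mprod mult e p (\<gamma>(i := Suc (\<gamma> i))) k = mult a s"
    unfolding e1 a_def s_def by (rule mprod_add)
  have e1': "\<gamma>'(i := Suc (\<gamma>' i)) = (\<lambda>l. \<gamma>' l + ei l)" by (auto simp: ei_def)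
  have A3: "mprod mult e p (\<gamma>'(i := Suc (\<gamma>' i))) k = mult (mprod mult e p \<gamma>' k) s"
    unfolding e1' s_def by (rule mprod_add)
  have "mprod mult e p \<gamma>' k =
        mprod mult e p (\<lambda>l. \<gamma> l + ((\<delta>(i := \<delta> i - 2)) l + (ei l + ei l))) k"
    by (rule mprod_cong) (use le gi in \<open>auto simp: \<delta>_def ei_def\<close>)
  also have "\<dots> = mult a (mult y (mult s s))"
    unfolding a_def y_def s_def by (simp only: mprod_add)
  finally have A2: "mprod mult e p \<gamma>' k = mult a (mult y (mult s s))" .
  have F1: "\<not> (mult a s \<le> q \<longleftrightarrow> a \<le> q)"
    using G[of "Ns (r 0)"] A1 unfolding a_def \<gamma>_def g_def by simp
  have F2: "\<not> (mult (mult a (mult y (mult s s))) s \<le> q \<longleftrightarrow> mult a (mult y (mult s s)) \<le> q)"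
    using G[of "Ns (r 1)"] A2 A3 unfolding \<gamma>'_def g_def by simp
  show False using core[OF F1 F2] .
qed

lemma stabN: "\<exists>N. \<forall>i\<in>{1..k}. \<forall>\<gamma>. N \<le> \<gamma> i \<longrightarrow>
     (mprod mult e p (\<gamma>(i := Suc (\<gamma> i))) k \<le> q \<longleftrightarrow> mprod mult e p \<gamma> k \<le> q)"
proof -
  have "\<forall>i\<in>{1..k}. \<exists>N. \<forall>\<gamma>. N \<le> \<gamma> i \<longrightarrow>
     (mprod mult e p (\<gamma>(i := Suc (\<gamma> i))) k \<le> q \<longleftrightarrow> mprod mult e p \<gamma> k \<le> q)"
    using stab by auto
  then obtain Nf where Nf: "\<forall>i\<in>{1..k}. \<forall>\<gamma>. Nf i \<le> \<gamma> i \<longrightarrow>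
     (mprod mult e p (\<gamma>(i := Suc (\<gamma> i))) k \<le> q \<longleftrightarrow> mprod mult e p \<gamma> k \<le> q)"
    by metis
  have "\<forall>i\<in>{1..k}. Nf i \<le> sum Nf {1..k}" by (auto intro: member_le_sum)
  then show ?thesis using Nf le_trans by blast
qed

lemma stab_n:
  assumes H: "\<forall>i\<in>{1..k}. \<forall>\<gamma>. N \<le> \<gamma> i \<longrightarrow>
     (mprod mult e p (\<gamma>(i := Suc (\<gamma> i))) k \<le> q \<longleftrightarrow> mprod mult e p \<gamma> k \<le> q)"
    and i: "i \<in> {1..k}" and g: "N \<le> \<gamma> i"
  shows "mprod mult e p (\<gamma>(i := \<gamma> i + n)) k \<le> q \<longleftrightarrow> mprod mult e p \<gamma> k \<le> q"
proof (induction n)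
  case 0 then show ?case by simp
next
  case (Suc n)
  have "\<gamma>(i := \<gamma> i + Suc n) = (\<gamma>(i := \<gamma> i + n))(i := Suc ((\<gamma>(i := \<gamma> i + n)) i))" by simp
  moreover have "N \<le> (\<gamma>(i := \<gamma> i + n)) i" using g by simp
  ultimately show ?case using H i Suc.IH by metis
qed

lemma stab_m:
  assumes H: "\<forall>i\<in>{1..k}. \<forall>\<gamma>. N \<le> \<gamma> i \<longrightarrow>
     (mprod mult e p (\<gamma>(i := Suc (\<gamma> i))) k \<le> q \<longleftrightarrow> mprod mult e p \<gamma> k \<le> q)"
    and i: "i \<in> {1..k}" and g: "N \<le> \<gamma> i" and m: "N \<le> m"
  shows "mprod mult e p (\<gamma>(i := m)) k \<le> q \<longleftrightarrow> mprod mult e p \<gamma> k \<le> q"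
proof -
  define \<gamma>0 where "\<gamma>0 = \<gamma>(i := N)"
  have 1: "\<gamma>(i := m) = \<gamma>0(i := \<gamma>0 i + (m - N))" using m by (simp add: \<gamma>0_def)
  have 2: "\<gamma> = \<gamma>0(i := \<gamma>0 i + (\<gamma> i - N))" using g by (auto simp: \<gamma>0_def)
  have "N \<le> \<gamma>0 i" by (simp add: \<gamma>0_def)
  then show ?thesis using stab_n[OF H i, of \<gamma>0] 1 2 by metis
qed

lemma clampeq:
  assumes H: "\<forall>i\<in>{1..k}. \<forall>\<gamma>. N \<le> \<gamma> i \<longrightarrow>
     (mprod mult e p (\<gamma>(i := Suc (\<gamma> i))) k \<le> q \<longleftrightarrow> mprod mult e p \<gamma> k \<le> q)"
    and F: "finite F"
  shows "\<forall>\<gamma>. {l\<in>{1..k}. \<gamma> l \<noteq> \<gamma>' l} \<subseteq> F \<longrightarrow>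
     (\<forall>l\<in>{1..k}. \<gamma> l = \<gamma>' l \<or> (N \<le> \<gamma> l \<and> N \<le> \<gamma>' l)) \<longrightarrow>
     (mprod mult e p \<gamma> k \<le> q \<longleftrightarrow> mprod mult e p \<gamma>' k \<le> q)"
  using F
proof (induction F rule: finite_induct)
  case empty
  show ?case
  proof (intro allI impI)
    fix \<gamma> :: "nat \<Rightarrow> nat"
    assume "{l\<in>{1..k}. \<gamma> l \<noteq> \<gamma>' l} \<subseteq> {}"
    then have "mprod mult e p \<gamma> k = mprod mult e p \<gamma>' k" by (intro mprod_cong) auto
    then show "mprod mult e p \<gamma> k \<le> q \<longleftrightarrow> mprod mult e p \<gamma>' k \<le> q" by simp
  qed
next
  case (insert j F)
  show ?case
  proof (intro allI impI)
    fix \<gamma> :: "nat \<Rightarrow> nat"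
    assume sub: "{l\<in>{1..k}. \<gamma> l \<noteq> \<gamma>' l} \<subseteq> insert j F"
      and cond: "\<forall>l\<in>{1..k}. \<gamma> l = \<gamma>' l \<or> (N \<le> \<gamma> l \<and> N \<le> \<gamma>' l)"
    show "mprod mult e p \<gamma> k \<le> q \<longleftrightarrow> mprod mult e p \<gamma>' k \<le> q"
    proof (cases "j \<in> {1..k} \<and> \<gamma> j \<noteq> \<gamma>' j")
      case True
      define \<gamma>1 where "\<gamma>1 = \<gamma>(j := \<gamma>' j)"
      have sub1: "{l\<in>{1..k}. \<gamma>1 l \<noteq> \<gamma>' l} \<subseteq> F" using sub by (auto simp: \<gamma>1_def)
      have cond1: "\<forall>l\<in>{1..k}. \<gamma>1 l = \<gamma>' l \<or> (N \<le> \<gamma>1 l \<and> N \<le> \<gamma>' l)"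
        using cond by (auto simp: \<gamma>1_def)
      have n1: "N \<le> \<gamma> j" and n2: "N \<le> \<gamma>' j" using cond True by auto
      have jk: "j \<in> {1..k}" using True by blast
      have "mprod mult e p \<gamma>1 k \<le> q \<longleftrightarrow> mprod mult e p \<gamma> k \<le> q"
        unfolding \<gamma>1_def by (rule stab_m, rule H, rule jk, rule n1, rule n2)
      then show ?thesis using insert.IH sub1 cond1 by blast
    next
      case False
      then have "{l\<in>{1..k}. \<gamma> l \<noteq> \<gamma>' l} \<subseteq> F" using sub by auto
      then show ?thesis using insert.IH cond by blast
    qed
  qed
qed

lemma fin: "finite (Mimp mult (Mset mult e p k) q)"
proof -
  obtain N where H: "\<forall>i\<in>{1..k}. \<forall>\<gamma>. N \<le> \<gamma> i \<longrightarrow>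
     (mprod mult e p (\<gamma>(i := Suc (\<gamma> i))) k \<le> q \<longleftrightarrow> mprod mult e p \<gamma> k \<le> q)"
    using stabN by blast
  define cl where "cl \<beta> = (\<lambda>i. if i \<in> {1..k} then min (\<beta> i) N else 0)" for \<beta> :: "nat \<Rightarrow> nat"
  define D where "D \<beta> = downset mult (Mset mult e p k) (mprod mult e p \<beta> k) q" for \<beta>
  have key: "D \<beta> = D (cl \<beta>)" for \<beta>
  proof -
    have "mult (mprod mult e p \<beta> k) (mprod mult e p \<alpha> k) \<le> q \<longleftrightarrow>
          mult (mprod mult e p (cl \<beta>) k) (mprod mult e p \<alpha> k) \<le> q" for \<alpha>
    proof -
      have "mprod mult e p (\<lambda>i. \<beta> i + \<alpha> i) k \<le> q \<longleftrightarrow>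
            mprod mult e p (\<lambda>i. cl \<beta> i + \<alpha> i) k \<le> q"
      proof -
        have c1: "{l \<in> {1..k}. \<beta> l + \<alpha> l \<noteq> cl \<beta> l + \<alpha> l} \<subseteq> {1..k}" by blast
        have c2: "\<forall>l\<in>{1..k}. \<beta> l + \<alpha> l = cl \<beta> l + \<alpha> l \<or>
                 (N \<le> \<beta> l + \<alpha> l \<and> N \<le> cl \<beta> l + \<alpha> l)"
          by (auto simp: cl_def)
        show ?thesis
          using clampeq[OF H finite_atLeastAtMost, rule_format,
              where \<gamma>="\<lambda>i. \<beta> i + \<alpha> i" and \<gamma>'="\<lambda>i. cl \<beta> i + \<alpha> i"] c1 c2
          by simp
      qed
      then show ?thesis by (simp only: mprod_add)
    qed
    then show ?thesis unfolding D_def downset_def Mset_def by blast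
  qed
  have "Mimp mult (Mset mult e p k) q = D ` UNIV"
    unfolding Mimp_def Mset_def D_def by auto
  also have "\<dots> \<subseteq> D ` {f. \<forall>x. (x \<in> {1..k} \<longrightarrow> f x \<in> {0..N}) \<and> (x \<notin> {1..k} \<longrightarrow> f x = 0)}"
  proof
    fix X assume "X \<in> D ` UNIV"
    then obtain \<beta> where "X = D \<beta>" by blast
    then have "X = D (cl \<beta>)" using key by simp
    moreover have "cl \<beta> \<in> {f. \<forall>x. (x \<in> {1..k} \<longrightarrow> f x \<in> {0..N}) \<and> (x \<notin> {1..k} \<longrightarrow> f x = 0)}"
      by (auto simp: cl_def)
    ultimately show "X \<in> D ` {f. \<forall>x. (x \<in> {1..k} \<longrightarrow> f x \<in> {0..N}) \<and> (x \<notin> {1..k} \<longrightarrow> f x = 0)}"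
      by blast
  qed
  finally show ?thesis
    using finite_subset finite_set_of_finite_funs[of "{1..k}" "{0..N}" 0] by blast
qed

lemma chain:
  assumes "X \<in> Mimp mult M q" "Y \<in> Mimp mult M q"
  shows "X \<subseteq> Y \<or> Y \<subseteq> X"
proof -
  obtain m m' where X: "X = downset mult M m q" and Y: "Y = downset mult M m' q"
    using assms unfolding Mimp_def by blast
  have sub: "downset mult M m2 q \<subseteq> downset mult M m1 q" if "m1 \<le> m2" for m1 m2
    unfolding downset_def using mono_l[OF that] order_trans by blast
  show ?thesis using lin[of m m'] sub X Y by blast
qed

end

theorem lemma4p7:
  fixes mult imp :: "'a::bounded_lattice \<Rightarrow> 'a \<Rightarrow> 'a"
    and e f :: 'a
    and p :: "nat \<Rightarrow> 'a"
    and k :: nat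
    and q :: 'a
  assumes "UL_omega_algebra mult imp e f"
    and "\<forall>x y::'a. x \<le> y \<or> y \<le> x"
    and "q \<in> p ` {1..k}"
  shows "(\<forall>X \<in> Mimp mult (Mset mult e p k) q. \<forall>Y \<in> Mimp mult (Mset mult e p k) q.
            X \<subseteq> Y \<or> Y \<subseteq> X)
         \<and> finite (Mimp mult (Mset mult e p k) q)"
proof -
  interpret ulc mult imp e
    using assms(1,2) unfolding UL_omega_algebra_def UL_algebra_def
    by unfold_locales blast+
  show ?thesis using chain fin by blast
qed

end
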